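(* Let $D\ge2$ be fixed and $\lambda>0$. Let $\Gamma$ be a complete $D$-ary tree of depth $h\ge\bar h$ such that $K=o(n)$. Then for a realization $G$ of the graph under $\mathbb{P}_1$, the overlap of any estimator $\hat{\mathcal K}$ of the planted set satisfies $\mathrm{ov}(\hat{\mathcal K})\le(1-\delta)K$ for some $\delta>0$.
   Context: Model: $\mathbb{P}_1$: $G=G_0\cup G'$ with $G_0\sim\mathcal G(n,\lambda/n)$ and $G'$ the image of $\Gamma$ under an injection $\sigma$ of its vertex set into $[n]$ chosen uniformly at random independently of $G_0$; $\mathcal K$ is the image of $\sigma$. An estimator is a set $\hat{\mathcal K}$ of $K$ nodes computed from $G$; $\mathrm{ov}(\hat{\mathcal K})=\sum_{i\in[n]}\mathbb{P}_1(i\in\hat{\mathcal K}\cap\mathcal K)$. A complete $D$-ary tree of depth $h$ has root at depth $0$, each vertex at depth $<h$ has $D$ children, and $K=(D^{h+1}-1)/(D-1)$ vertices. $p_h$ is the probability that a Galton–Watson tree with offspring law $\mathrm{Poi}(\lambda)$ contains a complete $D$-ary tree of depth $h$ rooted at its root; $\bar h=\inf\{h>0:p_h<1/n\}$. *)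

theory Defs
  imports "HOL-Probability.Probability" "HOL-Library.Landau_Symbols"
begin

datatype rtree = Node "rtree list"

text \<open>Galton--Watson tree with offspring law Poi(lambda), truncated at depth h
  (vertices at depth h are leaves).  The truncation does not affect events
  concerning the first h generations.\<close>
primrec gw_tree :: "real \<Rightarrow> nat \<Rightarrow> rtree pmf" where
  "gw_tree lam 0 = return_pmf (Node [])"
| "gw_tree lam (Suc h) =
     do { k \<leftarrow> poisson_pmf lam; ts \<leftarrow> replicate_pmf k (gw_tree lam h); return_pmf (Node ts) }"

primrec contains_Dary :: "nat \<Rightarrow> nat \<Rightarrow> rtree \<Rightarrow> bool" where
  "contains_Dary D 0 t = True"
| "contains_Dary D (Suc h) t =
     (case t of Node ts \<Rightarrow> D \<le> length (filter (contains_Dary D h) ts))"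

definition p_gw :: "nat \<Rightarrow> real \<Rightarrow> nat \<Rightarrow> real" where
  "p_gw D lam h = measure_pmf.prob (gw_tree lam h) {t. contains_Dary D h t}"

definition hbar :: "nat \<Rightarrow> real \<Rightarrow> nat \<Rightarrow> enat" where
  "hbar D lam n = (if \<exists>h>0. p_gw D lam h < 1 / real n
                    then enat (LEAST h. h > 0 \<and> p_gw D lam h < 1 / real n) else \<infinity>)"

text \<open>Vertex set [n] = {0..<n}; a graph is its set of edges (2-element sets).\<close>
definition all_edges :: "nat \<Rightarrow> nat set set" where
  "all_edges n = {e. \<exists>i j. i < n \<and> j < n \<and> i \<noteq> j \<and> e = {i, j}}"

definition erdos_renyi :: "nat \<Rightarrow> real \<Rightarrow> nat set set pmf" where
  "erdos_renyi n p =
     map_pmf (\<lambda>f. {e \<in> all_edges n. f e}) (Pi_pmf (all_edges n) False (\<lambda>_. bernoulli_pmf p))"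

text \<open>Complete D-ary tree of depth h: vertices are words over {0..<D} of length at most h
  (root = empty word), and each word xs is joined to its children xs @ [c].\<close>
definition dary_vertices :: "nat \<Rightarrow> nat \<Rightarrow> nat list set" where
  "dary_vertices D h = {xs. length xs \<le> h \<and> set xs \<subseteq> {..<D}}"

definition dary_edges :: "nat \<Rightarrow> nat \<Rightarrow> nat list set set" where
  "dary_edges D h = {{xs, xs @ [c]} | xs c. length xs < h \<and> set xs \<subseteq> {..<D} \<and> c < D}"

definition dary_size :: "nat \<Rightarrow> nat \<Rightarrow> nat" where
  "dary_size D h = (D ^ (h + 1) - 1) div (D - 1)"

definition random_injection :: "nat \<Rightarrow> nat \<Rightarrow> nat \<Rightarrow> (nat list \<Rightarrow> nat) pmf" where
  "random_injection D h n =
     pmf_of_set {\<sigma> \<in> dary_vertices D h \<rightarrow>\<^sub>E {..<n}. inj_on \<sigma> (dary_vertices D h)}"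

definition planted_model :: "nat \<Rightarrow> real \<Rightarrow> nat \<Rightarrow> nat \<Rightarrow> (nat set set \<times> nat set) pmf" where
  "planted_model D lam h n =
     do { G0 \<leftarrow> erdos_renyi n (lam / real n);
          \<sigma> \<leftarrow> random_injection D h n;
          return_pmf (G0 \<union> (\<lambda>e. \<sigma> ` e) ` dary_edges D h, \<sigma> ` dary_vertices D h) }"

definition estimator :: "nat \<Rightarrow> nat \<Rightarrow> (nat set set \<Rightarrow> nat set) \<Rightarrow> bool" where
  "estimator n K est = (\<forall>G. est G \<subseteq> {..<n} \<and> card (est G) = K)"

definition overlap :: "nat \<Rightarrow> real \<Rightarrow> nat \<Rightarrow> nat \<Rightarrow> (nat set set \<Rightarrow> nat set) \<Rightarrow> real" where
  "overlap D lam h n est =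
     (\<Sum>i<n. measure_pmf.prob (planted_model D lam h n) {(G, S). i \<in> est G \<inter> S})"

end

theory Submission
  imports Defs
begin


lemma dary_vertices_eq: "dary_vertices D h = (\<Union>i\<in>{..h}. {xs. set xs \<subseteq> {..<D} \<and> length xs = i})"
  unfolding dary_vertices_def by auto

lemma card_dary_vertices: "card (dary_vertices D h) = (\<Sum>i\<le>h. D ^ i)"
proof -
  have "card (dary_vertices D h) = (\<Sum>i\<le>h. card {xs. set xs \<subseteq> {..<D} \<and> length xs = i})"
    unfolding dary_vertices_eq
    by (rule card_UN_disjoint) (auto simp: finite_lists_length_eq)
  also have "\<dots> = (\<Sum>i\<le>h. D ^ i)" by (simp add: card_lists_length_eq)
  finally show ?thesis .
qed

lemma finite_dary_vertices: "finite (dary_vertices D h)"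
  unfolding dary_vertices_eq by (auto simp: finite_lists_length_eq)

lemma geom_nat: "(D - 1) * (\<Sum>i\<le>h. D ^ i) = D ^ (h+1) - (1::nat)"
proof (induction h)
  case 0 then show ?case by simp
next
  case (Suc h)
  have "(D - 1) * (\<Sum>i\<le>Suc h. D ^ i) = (D ^ (h+1) - 1) + (D - 1) * D^(h+1)"
    using Suc by (simp add: algebra_simps)
  also have "\<dots> = D ^ (Suc h + 1) - 1"
  proof (cases "D = 0")
    case False
    then have "D ^ (h+1) \<ge> 1" by simp
    then show ?thesis by (simp add: algebra_simps diff_mult_distrib)
  qed simp
  finally show ?case .
qed

lemma dary_size_eq: assumes "D \<ge> 2" shows "dary_size D h = (\<Sum>i\<le>h. D ^ i)"
proof -
  have "D - 1 > 0" using assms by simp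
  then show ?thesis unfolding dary_size_def using geom_nat[of D h]
    by (metis nonzero_mult_div_cancel_left not_gr0)
qed

lemma card_dary_vertices': "D \<ge> 2 \<Longrightarrow> card (dary_vertices D h) = dary_size D h"
  by (simp add: card_dary_vertices dary_size_eq)

lemma geom_le: "(D::nat) \<ge> 2 \<Longrightarrow> (\<Sum>i\<le>h. D ^ i) \<le> 2 * D ^ (h::nat)"
proof (induction h)
  case (Suc h)
  then have "(\<Sum>i\<le>Suc h. D ^ i) \<le> 2 * D^h + D^(Suc h)" by simp
  also have "2 * D^h \<le> D^(Suc h)" using Suc.prems by simp
  finally show ?case by simp
qed simp



definition sw :: "'a \<Rightarrow> 'a \<Rightarrow> 'a \<Rightarrow> 'a" where
  "sw a b x = (if x = a then b else if x = b then a else x)"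

lemma sw_sw[simp]: "sw a b (sw a b x) = x" by (auto simp: sw_def)
lemma sw_comm: "sw a b = sw b a" by (auto simp: sw_def fun_eq_iff)

locale S =
  fixes D h n :: nat and lam :: real
  assumes D2: "D \<ge> 2" and h1: "h \<ge> 1" and q0: "0 \<le> lam / n" and q1: "lam / n \<le> 1"
    and Kn: "dary_size D h \<le> n"
begin

abbreviation "V \<equiv> dary_vertices D h"
abbreviation "A \<equiv> all_edges n"
abbreviation "q \<equiv> lam / real n"
definition "Inj = {\<sigma> \<in> V \<rightarrow>\<^sub>E {..<n}. inj_on \<sigma> V}"
definition "Fp = Pi_pmf A False (\<lambda>_. bernoulli_pmf q)"
definition "Om = pair_pmf Fp (pmf_of_set Inj)"
definition "Ws = PiE_dflt A False (\<lambda>_. UNIV) \<times> Inj"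
definition Gr :: "(nat set \<Rightarrow> bool) \<times> (nat list \<Rightarrow> nat) \<Rightarrow> nat set set" where
  "Gr \<omega> = {e \<in> A. fst \<omega> e} \<union> (\<lambda>e. snd \<omega> ` e) ` dary_edges D h"
definition "Par = {p. length p = h - 1 \<and> set p \<subseteq> {..<D}}"

lemma finite_A: "finite A"
proof -
  have "A \<subseteq> Pow {..<n}" unfolding all_edges_def by auto
  then show ?thesis by (rule finite_subset) simp
qed

lemma finite_Inj: "finite Inj"
  unfolding Inj_def by (rule finite_subset[of _ "V \<rightarrow>\<^sub>E {..<n}"]) (auto intro!: finite_PiE finite_dary_vertices)

lemma Inj_ne: "Inj \<noteq> {}"
proof -
  have "card V \<le> card {..<n}" using Kn card_dary_vertices'[OF D2] by simp
  from card_le_inj[OF finite_dary_vertices finite_lessThan this]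
  obtain g where g: "g ` V \<subseteq> {..<n}" "inj_on g V" by blast
  have "restrict g V \<in> V \<rightarrow>\<^sub>E {..<n}" using g(1) by auto
  moreover have "inj_on (restrict g V) V" using g(2) inj_on_cong[of V "restrict g V" g] by simp
  ultimately have "restrict g V \<in> Inj" unfolding Inj_def by blast
  then show ?thesis by blast
qed

lemma finite_Ws: "finite Ws"
  unfolding Ws_def using finite_A finite_Inj by (auto intro!: finite_PiE_dflt)

lemma set_Om: "set_pmf Om \<subseteq> Ws"
proof -
  have "set_pmf Fp \<subseteq> PiE_dflt A False (\<lambda>_. UNIV)"
    unfolding Fp_def using finite_A by (auto simp: set_Pi_pmf PiE_dflt_def)
  moreover have "set_pmf (pmf_of_set Inj) = Inj" using finite_Inj Inj_ne by simp
  ultimately show ?thesis unfolding Om_def Ws_def by (auto simp: set_pair_pmf)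
qed

lemma prob_sum: "measure_pmf.prob Om X = (\<Sum>a\<in>Ws. pmf Om a * indicator X a)"
proof -
  have "measure_pmf.prob Om X = measure_pmf.expectation Om (indicator X)"
    by simp
  also have "\<dots> = (\<Sum>a\<in>Ws. indicator X a * pmf Om a)"
    by (rule integral_measure_pmf_real) (use finite_Ws set_Om in auto)
  finally show ?thesis by (simp add: mult.commute)
qed

lemma planted_eq: "planted_model D lam h n = map_pmf (\<lambda>\<omega>. (Gr \<omega>, snd \<omega> ` V)) Om"
proof -
  have 1: "planted_model D lam h n = bind_pmf Fp (\<lambda>f. bind_pmf (pmf_of_set Inj) (\<lambda>\<sigma>. return_pmf (Gr (f,\<sigma>), \<sigma> ` V)))"
    unfolding planted_model_def erdos_renyi_def Fp_def random_injection_def Inj_def Gr_def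
    by (simp only: bind_map_pmf o_def fst_conv snd_conv)
  have 2: "map_pmf (\<lambda>\<omega>. (Gr \<omega>, snd \<omega> ` V)) Om = bind_pmf Fp (\<lambda>f. bind_pmf (pmf_of_set Inj) (\<lambda>\<sigma>. return_pmf (Gr (f,\<sigma>), \<sigma> ` V)))"
    unfolding Om_def pair_pmf_def by (simp only: map_bind_pmf map_return_pmf snd_conv)
  show ?thesis using 1 2 by simp
qed

lemma overlap_eq:
  assumes est: "estimator n (dary_size D h) est"
  shows "overlap D lam h n est = (\<Sum>\<omega>\<in>Ws. pmf Om \<omega> * real (card (est (Gr \<omega>) \<inter> snd \<omega> ` V)))"
proof -
  have "overlap D lam h n est = (\<Sum>i<n. \<Sum>\<omega>\<in>Ws. pmf Om \<omega> * indicator {\<omega>. i \<in> est (Gr \<omega>) \<inter> snd \<omega> ` V} \<omega>)"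
    unfolding overlap_def planted_eq measure_map_pmf prob_sum
    by (intro sum.cong refl arg_cong2[where f="(*)"]) (auto simp: indicator_def)
  also have "\<dots> = (\<Sum>\<omega>\<in>Ws. pmf Om \<omega> * (\<Sum>i<n. indicator {\<omega>. i \<in> est (Gr \<omega>) \<inter> snd \<omega> ` V} \<omega>))"
    by (subst sum.swap) (simp add: sum_distrib_left)
  also have "\<dots> = (\<Sum>\<omega>\<in>Ws. pmf Om \<omega> * real (card (est (Gr \<omega>) \<inter> snd \<omega> ` V)))"
  proof (rule sum.cong[OF refl])
    fix \<omega>
    have sub: "est (Gr \<omega>) \<inter> snd \<omega> ` V \<subseteq> {..<n}" using est unfolding estimator_def by auto
    have "(\<Sum>i<n. indicator {\<omega>. i \<in> est (Gr \<omega>) \<inter> snd \<omega> ` V} \<omega> :: real)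
        = (\<Sum>i<n. indicator (est (Gr \<omega>) \<inter> snd \<omega> ` V) i)"
      by (simp add: indicator_def)
    also have "\<dots> = real (card ({..<n} \<inter> (est (Gr \<omega>) \<inter> snd \<omega> ` V)))"
      by (simp add: indicator_def sum.If_cases Int_commute Collect_conj_eq)
    also have "{..<n} \<inter> (est (Gr \<omega>) \<inter> snd \<omega> ` V) = est (Gr \<omega>) \<inter> snd \<omega> ` V" using sub by blast
    finally show "pmf Om \<omega> * (\<Sum>i<n. indicator {\<omega>. i \<in> est (Gr \<omega>) \<inter> snd \<omega> ` V} \<omega>)
        = pmf Om \<omega> * real (card (est (Gr \<omega>) \<inter> snd \<omega> ` V))" by simp
  qed
  finally show ?thesis .
qed

end


context S begin

definition "Good p a b f \<sigma> \<longleftrightarrow> \<sigma> \<in> Inj \<and> \<sigma> (p@[0]) = a \<and> b < n \<and> b \<notin> \<sigma> ` V \<and> f {\<sigma> p, b} \<and> \<not> f {\<sigma> p, a}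
   \<and> (\<forall>x<n. x \<notin> \<sigma> ` V \<longrightarrow> x \<noteq> b \<longrightarrow> \<not> f {\<sigma> p, x})
   \<and> (\<forall>y\<in>\<sigma> ` V. y \<noteq> \<sigma> p \<longrightarrow> y \<noteq> a \<longrightarrow> \<not> f {a, y} \<and> \<not> f {b, y})"

definition "Tm p a b f \<sigma> = (if Good p a b f \<sigma> \<or> Good p b a f \<sigma>
   then (f \<circ> sw {\<sigma> p, a} {\<sigma> p, b}, \<sigma>(p@[0] := sw a b (\<sigma> (p@[0])))) else (f, \<sigma>))"

lemma Par_facts: assumes "p \<in> Par" shows "p \<in> V" "p@[0] \<in> V" "p \<noteq> p@[0]" "length (p@[0]) = h"
  using assms h1 D2 unfolding Par_def dary_vertices_def by auto

lemma Good_facts: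
  assumes p: "p \<in> Par" and G: "Good p a b f \<sigma>"
  shows "a \<noteq> b" "\<sigma> p \<noteq> a" "\<sigma> p \<noteq> b" "a < n" "\<sigma> p < n" "a \<in> \<sigma> ` V" "\<sigma> p \<in> \<sigma> ` V"
    "{\<sigma> p, a} \<noteq> {\<sigma> p, b}" "inj_on \<sigma> V" "\<sigma> \<in> V \<rightarrow>\<^sub>E {..<n}"
proof -
  note pf = Par_facts[OF p]
  have inj: "inj_on \<sigma> V" and sig: "\<sigma> \<in> V \<rightarrow>\<^sub>E {..<n}" using G unfolding Good_def Inj_def by auto
  show "inj_on \<sigma> V" "\<sigma> \<in> V \<rightarrow>\<^sub>E {..<n}" by fact+
  show aV: "a \<in> \<sigma> ` V" using G pf unfolding Good_def by auto
  show "a \<noteq> b" using G aV unfolding Good_def by auto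
  show "\<sigma> p \<noteq> a" using G pf inj unfolding Good_def by (metis inj_on_contraD)
  show "\<sigma> p \<noteq> b" using G pf unfolding Good_def by auto
  show "a < n" using aV sig by auto
  show "\<sigma> p < n" using sig pf by auto
  show "\<sigma> p \<in> \<sigma> ` V" using pf by auto
  show "{\<sigma> p, a} \<noteq> {\<sigma> p, b}" using \<open>a \<noteq> b\<close> \<open>\<sigma> p \<noteq> a\<close> by (auto simp: doubleton_eq_iff)
qed

lemma Good_swap:
  assumes p: "p \<in> Par" and G: "Good p a b f \<sigma>"
  shows "Good p b a (f \<circ> sw {\<sigma> p, a} {\<sigma> p, b}) (\<sigma>(p@[0] := b))"
proof -
  note pf = Par_facts[OF p]
  note gf = Good_facts[OF p G]
  define w where "w = p @ [0]"
  define u where "u = \<sigma> p"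
  define \<sigma>' where "\<sigma>' = \<sigma>(w := b)"
  define f' where "f' = f \<circ> sw {u, a} {u, b}"
  have G': "\<sigma> w = a" "b < n" "b \<notin> \<sigma> ` V" "f {u, b}" "\<not> f {u, a}"
     "\<And>x. x < n \<Longrightarrow> x \<notin> \<sigma> ` V \<Longrightarrow> x \<noteq> b \<Longrightarrow> \<not> f {u, x}"
     "\<And>y. y \<in> \<sigma> ` V \<Longrightarrow> y \<noteq> u \<Longrightarrow> y \<noteq> a \<Longrightarrow> \<not> f {a, y} \<and> \<not> f {b, y}"
    using G unfolding Good_def w_def u_def by auto
  have wV: "w \<in> V" and pV: "p \<in> V" and pw: "p \<noteq> w" using pf by (auto simp: w_def)
  have up: "\<sigma>' p = u" using pw by (simp add: \<sigma>'_def u_def)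
  have img: "\<sigma>' ` V = insert b (\<sigma> ` V - {a})"
  proof -
    have "\<sigma>' ` V = insert b (\<sigma> ` (V - {w}))" using wV by (auto simp: \<sigma>'_def)
    also have "\<sigma> ` (V - {w}) = \<sigma> ` V - {a}"
      using gf(9) wV G'(1) by (auto dest: inj_onD)
    finally show ?thesis .
  qed
  have inj': "inj_on \<sigma>' V"
    unfolding inj_on_def \<sigma>'_def using gf(9) G'(3) by (auto simp: inj_on_def)
  have "\<sigma>' \<in> V \<rightarrow>\<^sub>E {..<n}" using gf(10) wV G'(2) by (auto simp: \<sigma>'_def PiE_def extensional_def Pi_def)
  with inj' have "\<sigma>' \<in> Inj" unfolding Inj_def by blast
  have sab: "sw {u, a} {u, b} {u, a} = {u, b}" "sw {u, a} {u, b} {u, b} = {u, a}"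
    using gf(8) by (auto simp: sw_def u_def)
  have ne: "\<And>x. x \<noteq> a \<Longrightarrow> x \<noteq> b \<Longrightarrow> sw {u, a} {u, b} {u, x} = {u, x}"
    using gf(2,3) by (auto simp: sw_def doubleton_eq_iff u_def)
  have ne2: "\<And>x y. x \<noteq> u \<Longrightarrow> y \<noteq> u \<Longrightarrow> sw {u, a} {u, b} {x, y} = {x, y}"
    by (auto simp: sw_def doubleton_eq_iff)
  have "Good p b a f' \<sigma>'"
    unfolding Good_def
  proof (intro conjI ballI allI impI)
    show "\<sigma>' \<in> Inj" by fact
    show "\<sigma>' (p @ [0]) = b" by (simp add: \<sigma>'_def w_def)
    show "a < n" by (rule gf(4))
    show "a \<notin> \<sigma>' ` V" using img gf(1) by auto
    show "f' {\<sigma>' p, a}" using up sab G'(4) by (simp add: f'_def)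
    show "\<not> f' {\<sigma>' p, b}" using up sab G'(5) by (simp add: f'_def)
  next
    fix x assume x: "x < n" "x \<notin> \<sigma>' ` V" "x \<noteq> a"
    then have "x \<noteq> b" "x \<notin> \<sigma> ` V" using img by auto
    then show "\<not> f' {\<sigma>' p, x}" using x up ne G'(6) by (simp add: f'_def)
  next
    fix y assume y: "y \<in> \<sigma>' ` V" "y \<noteq> \<sigma>' p" "y \<noteq> b"
    then have y2: "y \<in> \<sigma> ` V" "y \<noteq> a" "y \<noteq> u" using img up by auto
    have "b \<noteq> u" "a \<noteq> u" using gf(2,3) by (auto simp: u_def)
    then show "\<not> f' {b, y}" "\<not> f' {a, y}" using y2 ne2 G'(7) by (simp_all add: f'_def)
  qed
  then show ?thesis by (simp add: f'_def \<sigma>'_def u_def w_def)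
qed

end


context S begin

lemma Tm_sym: "Tm p a b = Tm p b a"
  unfolding Tm_def by (auto simp: fun_eq_iff sw_comm[of a b] sw_comm[of "{_, a}"] intro!: ext)

lemma Tm_Good: assumes "p \<in> Par" "Good p a b f \<sigma>"
  shows "Tm p a b f \<sigma> = (f \<circ> sw {\<sigma> p, a} {\<sigma> p, b}, \<sigma>(p@[0] := b))"
  using assms unfolding Tm_def by (auto simp: Good_def sw_def)

lemma Tm_Good': assumes "p \<in> Par" "Good p a b f \<sigma>"
  shows "case Tm p a b f \<sigma> of (f', \<sigma>') \<Rightarrow> Good p b a f' \<sigma>'"
  using Tm_Good[OF assms] Good_swap[OF assms] by simp

lemma Tm_invol_aux: assumes p: "p \<in> Par" and G: "Good p a b f \<sigma>"
  shows "case Tm p a b f \<sigma> of (f', \<sigma>') \<Rightarrow> Tm p a b f' \<sigma>' = (f, \<sigma>)"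
proof -
  note pf = Par_facts[OF p]
  have G2: "Good p b a (f \<circ> sw {\<sigma> p, a} {\<sigma> p, b}) (\<sigma>(p@[0] := b))" by (rule Good_swap[OF p G])
  have sp: "(\<sigma>(p@[0] := b)) p = \<sigma> p" using pf by simp
  have "Tm p a b (f \<circ> sw {\<sigma> p, a} {\<sigma> p, b}) (\<sigma>(p@[0] := b))
      = Tm p b a (f \<circ> sw {\<sigma> p, a} {\<sigma> p, b}) (\<sigma>(p@[0] := b))" by (simp add: Tm_sym)
  also have "\<dots> = (f \<circ> sw {\<sigma> p, a} {\<sigma> p, b} \<circ> sw {\<sigma> p, b} {\<sigma> p, a}, \<sigma>(p@[0] := b, p@[0] := a))"
    using Tm_Good[OF p G2] sp by simp
  also have "\<dots> = (f, \<sigma>)"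
  proof -
    have "f \<circ> sw {\<sigma> p, a} {\<sigma> p, b} \<circ> sw {\<sigma> p, b} {\<sigma> p, a} = f"
      by (simp add: fun_eq_iff sw_comm[of "{\<sigma> p, b}"])
    moreover have "\<sigma>(p@[0] := b, p@[0] := a) = \<sigma>" using G unfolding Good_def by auto
    ultimately show ?thesis by simp
  qed
  finally show ?thesis using Tm_Good[OF p G] by simp
qed

lemma Tm_invol: assumes p: "p \<in> Par"
  shows "case Tm p a b f \<sigma> of (f', \<sigma>') \<Rightarrow> Tm p a b f' \<sigma>' = (f, \<sigma>)"
proof (cases "Good p a b f \<sigma>")
  case True then show ?thesis by (rule Tm_invol_aux[OF p])
next
  case F1: False
  show ?thesis
  proof (cases "Good p b a f \<sigma>")
    case True then show ?thesis using Tm_invol_aux[OF p True] Tm_sym[of p a b] by simp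
  next
    case False then show ?thesis using F1 unfolding Tm_def by simp
  qed
qed

lemma edge_in_A: "u < n \<Longrightarrow> a < n \<Longrightarrow> u \<noteq> a \<Longrightarrow> {u, a} \<in> A"
  unfolding all_edges_def by blast

lemma sw_bij: "e1 \<in> X \<Longrightarrow> e2 \<in> X \<Longrightarrow> bij_betw (sw e1 e2) X X"
  by (rule bij_betwI[of _ _ _ "sw e1 e2"]) (auto simp: sw_def)

lemma pmf_Fp: "pmf Fp f = (if (\<forall>x. x \<notin> A \<longrightarrow> f x = False) then \<Prod>x\<in>A. pmf (bernoulli_pmf q) (f x) else 0)"
  unfolding Fp_def by (rule pmf_Pi[OF finite_A])

lemma pmf_Fp_sw: assumes "e1 \<in> A" "e2 \<in> A" shows "pmf Fp (f \<circ> sw e1 e2) = pmf Fp f"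
proof -
  have out: "\<And>x. x \<notin> A \<Longrightarrow> sw e1 e2 x = x" using assms by (auto simp: sw_def)
  have "(\<Prod>x\<in>A. pmf (bernoulli_pmf q) (f (sw e1 e2 x))) = (\<Prod>x\<in>A. pmf (bernoulli_pmf q) (f x))"
    using prod.reindex_bij_betw[OF sw_bij[OF assms], of "\<lambda>x. pmf (bernoulli_pmf q) (f x)"] by simp
  moreover have "(\<forall>x. x \<notin> A \<longrightarrow> f (sw e1 e2 x) = False) \<longleftrightarrow> (\<forall>x. x \<notin> A \<longrightarrow> f x = False)"
    using out by auto
  ultimately show ?thesis unfolding pmf_Fp comp_def by (simp only:)
qed

lemma pmf_Om: "pmf Om (f, \<sigma>) = pmf Fp f * indicator Inj \<sigma> / real (card Inj)"
  unfolding Om_def using finite_Inj Inj_ne by (simp add: pmf_pair)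

lemma Tm_pmf: assumes p: "p \<in> Par" shows "pmf Om (Tm p a b f \<sigma>) = pmf Om (f, \<sigma>)"
proof -
  have *: "pmf Om (Tm p a b f \<sigma>) = pmf Om (f, \<sigma>)" if G: "Good p a b f \<sigma>" for a b
  proof -
    note gf = Good_facts[OF p G]
    have e: "{\<sigma> p, a} \<in> A" "{\<sigma> p, b} \<in> A"
      using gf G edge_in_A unfolding Good_def by auto
    have "Good p b a (f \<circ> sw {\<sigma> p, a} {\<sigma> p, b}) (\<sigma>(p@[0] := b))" by (rule Good_swap[OF p G])
    then have "\<sigma>(p@[0] := b) \<in> Inj" unfolding Good_def by simp
    moreover have "\<sigma> \<in> Inj" using G unfolding Good_def by simp
    ultimately show ?thesis using Tm_Good[OF p G] pmf_Fp_sw[OF e] by (simp add: pmf_Om)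
  qed
  show ?thesis
  proof (cases "Good p a b f \<sigma> \<or> Good p b a f \<sigma>")
    case True then show ?thesis using *[of a b] *[of b a] Tm_sym[of p a b] by auto
  next
    case False then show ?thesis unfolding Tm_def by simp
  qed
qed

end


context S begin

lemma dary_edges_iff: "e \<in> dary_edges D h \<longleftrightarrow> (\<exists>xs c. e = {xs, xs @ [c]} \<and> length xs < h \<and> set xs \<subseteq> {..<D} \<and> c < D)"
  unfolding dary_edges_def by blast

lemma Gr_Tm: assumes p: "p \<in> Par" and G: "Good p a b f \<sigma>"
  shows "Gr (Tm p a b f \<sigma>) = Gr (f, \<sigma>)"
proof -
  note pf = Par_facts[OF p]
  note gf = Good_facts[OF p G]
  define w where "w = p @ [0]"
  define u where "u = \<sigma> p"
  define \<sigma>' where "\<sigma>' = \<sigma>(w := b)"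
  define s where "s = sw {u, a} {u, b}"
  define f' where "f' = f \<circ> s"
  have T: "Tm p a b f \<sigma> = (f', \<sigma>')" using Tm_Good[OF p G] by (simp add: f'_def s_def \<sigma>'_def u_def w_def)
  have G': "\<sigma> w = a" "b < n" "b \<notin> \<sigma> ` V" "f {u, b}" "\<not> f {u, a}"
    using G unfolding Good_def w_def u_def by auto
  have ea: "{u, a} \<in> A" and eb: "{u, b} \<in> A"
    using gf G edge_in_A unfolding Good_def u_def by auto
  have sab: "s {u, a} = {u, b}" "s {u, b} = {u, a}" using gf(8) by (auto simp: sw_def s_def u_def)
  have sne: "\<And>e. e \<noteq> {u, a} \<Longrightarrow> e \<noteq> {u, b} \<Longrightarrow> s e = e" by (auto simp: s_def sw_def)
  have up: "\<sigma>' p = u" using pf by (simp add: \<sigma>'_def u_def w_def)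
  have pwE: "{p, w} \<in> dary_edges D h"
    unfolding dary_edges_iff w_def using p h1 D2 unfolding Par_def by (intro exI[of _ p] exI[of _ 0]) auto
  have img_pw: "\<sigma> ` {p, w} = {u, a}" "\<sigma>' ` {p, w} = {u, b}"
    using G'(1) up by (auto simp: u_def \<sigma>'_def)
  have Ecase: "\<sigma>' ` e = \<sigma> ` e \<or> (\<sigma> ` e = {u, a} \<and> \<sigma>' ` e = {u, b})" if e: "e \<in> dary_edges D h" for e
  proof -
    obtain xs c where xs: "e = {xs, xs @ [c]}" "length xs < h" "set xs \<subseteq> {..<D}" "c < D"
      using e unfolding dary_edges_iff by blast
    show ?thesis
    proof (cases "xs @ [c] = w")
      case True
      then have "xs = p" unfolding w_def by simp
      then have "e = {p, w}" using xs(1) True by simp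
      then show ?thesis using img_pw by simp
    next
      case False
      have "xs \<noteq> w" using xs(2) pf(4) by (auto simp: w_def)
      then have "\<sigma>' ` e = \<sigma> ` e" using False xs(1) by (auto simp: \<sigma>'_def)
      then show ?thesis by simp
    qed
  qed
  define F where "F = {e \<in> A. f e}"
  define F' where "F' = {e \<in> A. f' e}"
  define SE where "SE = (\<lambda>e. \<sigma> ` e) ` dary_edges D h"
  define SE' where "SE' = (\<lambda>e. \<sigma>' ` e) ` dary_edges D h"
  have 1: "F' \<subseteq> F \<union> {{u, a}}"
  proof
    fix e assume "e \<in> F'"
    then have e: "e \<in> A" "f (s e)" unfolding F'_def f'_def by auto
    show "e \<in> F \<union> {{u, a}}"
    proof (cases "e = {u, a} \<or> e = {u, b}")
      case True then show ?thesis using e sab G'(5) by auto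
    next
      case False then show ?thesis using e sne unfolding F_def by auto
    qed
  qed
  have 2: "F \<subseteq> F' \<union> {{u, b}}"
  proof
    fix e assume "e \<in> F"
    then have e: "e \<in> A" "f e" unfolding F_def by auto
    show "e \<in> F' \<union> {{u, b}}"
    proof (cases "e = {u, a} \<or> e = {u, b}")
      case True then show ?thesis using e sab G'(5) by auto
    next
      case False then show ?thesis using e sne unfolding F'_def f'_def by auto
    qed
  qed
  have 3: "SE' \<subseteq> SE \<union> {{u, b}}" unfolding SE_def SE'_def using Ecase by fastforce
  have 4: "SE \<subseteq> SE' \<union> {{u, a}}" unfolding SE_def SE'_def using Ecase by fastforce
  have ua: "{u, a} \<in> SE" "{u, a} \<in> F'" unfolding SE_def F'_def f'_def
    using pwE img_pw ea sab G'(4) by (auto intro!: image_eqI[of _ _ "{p, w}"])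
  have ub: "{u, b} \<in> SE'" "{u, b} \<in> F" unfolding SE'_def F_def
    using pwE img_pw eb G'(4) by (auto intro!: image_eqI[of _ _ "{p, w}"])
  have "F' \<union> SE' = F \<union> SE" using 1 2 3 4 ua ub by blast
  then show ?thesis unfolding T Gr_def F_def F'_def SE_def SE'_def by simp
qed

lemma Ks_Tm: assumes p: "p \<in> Par" and G: "Good p a b f \<sigma>"
  shows "snd (Tm p a b f \<sigma>) ` V = insert b (\<sigma> ` V - {a})"
proof -
  note pf = Par_facts[OF p]
  note gf = Good_facts[OF p G]
  have wV: "p@[0] \<in> V" using pf by simp
  have sa: "\<sigma> (p@[0]) = a" using G unfolding Good_def by simp
  have "\<sigma>(p@[0] := b) ` V = insert b (\<sigma> ` (V - {p@[0]}))" using wV by auto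
  also have "\<sigma> ` (V - {p@[0]}) = \<sigma> ` V - {a}"
    using gf(9) wV sa by (auto dest: inj_onD)
  finally show ?thesis using Tm_Good[OF p G] by simp
qed

lemma Tm_Ws: assumes p: "p \<in> Par" and W: "(f, \<sigma>) \<in> Ws" shows "Tm p a b f \<sigma> \<in> Ws"
proof -
  have *: "Tm p a b f \<sigma> \<in> Ws" if G: "Good p a b f \<sigma>" for a b
  proof -
    note gf = Good_facts[OF p G]
    have e: "{\<sigma> p, a} \<in> A" "{\<sigma> p, b} \<in> A"
      using gf G edge_in_A unfolding Good_def by auto
    have "Good p b a (f \<circ> sw {\<sigma> p, a} {\<sigma> p, b}) (\<sigma>(p@[0] := b))" by (rule Good_swap[OF p G])
    then have "\<sigma>(p@[0] := b) \<in> Inj" unfolding Good_def by simp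
    moreover have "f \<circ> sw {\<sigma> p, a} {\<sigma> p, b} \<in> PiE_dflt A False (\<lambda>_. UNIV)"
      using W e unfolding Ws_def PiE_dflt_def by (auto simp: sw_def)
    ultimately show ?thesis using Tm_Good[OF p G] unfolding Ws_def by simp
  qed
  show ?thesis
  proof (cases "Good p a b f \<sigma> \<or> Good p b a f \<sigma>")
    case True then show ?thesis using *[of a b] *[of b a] Tm_sym[of p a b] by auto
  next
    case False then show ?thesis using W unfolding Tm_def by simp
  qed
qed

end


context S begin

definition Exq :: "((nat set \<Rightarrow> bool) \<times> (nat list \<Rightarrow> nat) \<Rightarrow> real) \<Rightarrow> real" where "Exq g = (\<Sum>\<omega>\<in>Ws. pmf Om \<omega> * g \<omega>)"
definition "Tw p a b \<omega> = Tm p a b (fst \<omega>) (snd \<omega>)"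
definition "Gd p a b \<omega> = Good p a b (fst \<omega>) (snd \<omega>)"

lemma Tw_invol: "p \<in> Par \<Longrightarrow> Tw p a b (Tw p a b \<omega>) = \<omega>"
  using Tm_invol[of p a b "fst \<omega>" "snd \<omega>"] unfolding Tw_def by (auto split: prod.splits)

lemma Tw_Ws: "p \<in> Par \<Longrightarrow> \<omega> \<in> Ws \<Longrightarrow> Tw p a b \<omega> \<in> Ws"
  using Tm_Ws[of p "fst \<omega>" "snd \<omega>" a b] unfolding Tw_def by simp

lemma Tw_pmf: "p \<in> Par \<Longrightarrow> pmf Om (Tw p a b \<omega>) = pmf Om \<omega>"
  using Tm_pmf[of p a b "fst \<omega>" "snd \<omega>"] unfolding Tw_def by simp

lemma Ex_Tw: assumes p: "p \<in> Par" shows "Exq (\<lambda>\<omega>. g (Tw p a b \<omega>)) = Exq g"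
proof -
  have "Exq (\<lambda>\<omega>. g (Tw p a b \<omega>)) = (\<Sum>\<omega>\<in>Ws. pmf Om (Tw p a b \<omega>) * g (Tw p a b \<omega>))"
    unfolding Exq_def using Tw_pmf[OF p] by simp
  also have "\<dots> = (\<Sum>\<omega>\<in>Ws. pmf Om \<omega> * g \<omega>)"
    by (rule sum.reindex_bij_witness[of _ "Tw p a b" "Tw p a b"]) (auto simp: Tw_invol[OF p] Tw_Ws[OF p])
  finally show ?thesis unfolding Exq_def .
qed

lemma Gd_Tw: assumes p: "p \<in> Par" shows "Gd p b a (Tw p a b \<omega>) \<longleftrightarrow> Gd p a b \<omega>"
proof
  assume "Gd p a b \<omega>"
  then show "Gd p b a (Tw p a b \<omega>)" using Tm_Good'[OF p, of a b "fst \<omega>" "snd \<omega>"]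
    unfolding Gd_def Tw_def by (auto split: prod.splits)
next
  assume "Gd p b a (Tw p a b \<omega>)"
  then have "Gd p a b (Tw p b a (Tw p a b \<omega>))" using Tm_Good'[OF p, of b a "fst (Tw p a b \<omega>)" "snd (Tw p a b \<omega>)"]
    unfolding Gd_def Tw_def by (auto split: prod.splits)
  then show "Gd p a b \<omega>" using Tw_invol[OF p] Tm_sym[of p a b] unfolding Tw_def by metis
qed

lemma Gr_Tw: "p \<in> Par \<Longrightarrow> Gd p a b \<omega> \<Longrightarrow> Gr (Tw p a b \<omega>) = Gr \<omega>"
  using Gr_Tm[of p a b "fst \<omega>" "snd \<omega>"] unfolding Gd_def Tw_def by simp

lemma Ks_Tw: "p \<in> Par \<Longrightarrow> Gd p a b \<omega> \<Longrightarrow> snd (Tw p a b \<omega>) ` V = insert b (snd \<omega> ` V - {a})"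
  using Ks_Tm[of p a b "fst \<omega>" "snd \<omega>"] unfolding Gd_def Tw_def by simp

definition "Dl est \<omega> = (snd \<omega> ` V - est (Gr \<omega>)) \<union> (est (Gr \<omega>) - snd \<omega> ` V)"
definition "Y est p a b \<omega> = (if Gd p a b \<omega> then indicator (Dl est \<omega>) a + indicator (Dl est \<omega>) b else (0::real))"

lemma pair_identity: assumes p: "p \<in> Par"
  shows "Y est p a b \<omega> + Y est p b a (Tw p a b \<omega>) = 2 * indicator {\<omega>. Gd p a b \<omega>} \<omega>"
proof (cases "Gd p a b \<omega>")
  case True
  have G2: "Gd p b a (Tw p a b \<omega>)" using Gd_Tw[OF p] True by simp
  have gf: "a \<in> snd \<omega> ` V" "b \<notin> snd \<omega> ` V" "a \<noteq> b"
    using Good_facts[OF p, of a b "fst \<omega>" "snd \<omega>"] True unfolding Gd_def Good_def by auto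
  have K': "snd (Tw p a b \<omega>) ` V = insert b (snd \<omega> ` V - {a})" by (rule Ks_Tw[OF p True])
  have X': "Gr (Tw p a b \<omega>) = Gr \<omega>" by (rule Gr_Tw[OF p True])
  show ?thesis using True G2 gf unfolding Y_def Dl_def K' X' by (auto simp: indicator_def)
next
  case False
  then have "\<not> Gd p b a (Tw p a b \<omega>)" using Gd_Tw[OF p] by simp
  then show ?thesis using False unfolding Y_def by simp
qed

lemma Ex_add: "Exq (\<lambda>\<omega>. g1 \<omega> + g2 \<omega>) = Exq g1 + Exq g2"
  unfolding Exq_def by (simp add: distrib_left sum.distrib)

lemma EY_pair: assumes p: "p \<in> Par"
  shows "Exq (Y est p a b) + Exq (Y est p b a) = 2 * Exq (indicator {\<omega>. Gd p a b \<omega>})"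
proof -
  have "Exq (Y est p b a) = Exq (\<lambda>\<omega>. Y est p b a (Tw p a b \<omega>))" using Ex_Tw[OF p] by simp
  then have "Exq (Y est p a b) + Exq (Y est p b a) = Exq (\<lambda>\<omega>. Y est p a b \<omega> + Y est p b a (Tw p a b \<omega>))"
    by (simp add: Ex_add)
  also have "\<dots> = Exq (\<lambda>\<omega>. 2 * indicator {\<omega>. Gd p a b \<omega>} \<omega>)" using pair_identity[OF p] by simp
  also have "\<dots> = 2 * Exq (indicator {\<omega>. Gd p a b \<omega>})" unfolding Exq_def by (simp add: sum_distrib_left algebra_simps)
  finally show ?thesis .
qed

definition "J = Par \<times> {..<n} \<times> {..<n}"

lemma finite_Par: "finite Par"
proof -
  have "Par = {xs. set xs \<subseteq> {..<D} \<and> length xs = h - 1}" unfolding Par_def by auto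
  then show ?thesis by (simp add: finite_lists_length_eq)
qed

lemma card_Par: "card Par = D ^ (h - 1)"
proof -
  have "Par = {xs. set xs \<subseteq> {..<D} \<and> length xs = h - 1}" unfolding Par_def by auto
  then show ?thesis by (simp add: card_lists_length_eq)
qed

lemma finite_J: "finite J" unfolding J_def using finite_Par by simp

lemma sumJ_Y: "(\<Sum>(p,a,b)\<in>J. Exq (Y est p a b)) = (\<Sum>(p,a,b)\<in>J. Exq (indicator {\<omega>. Gd p a b \<omega>}))"
proof -
  have sw: "(\<Sum>(p,a,b)\<in>J. Exq (Y est p b a)) = (\<Sum>(p,a,b)\<in>J. Exq (Y est p a b))"
    by (rule sum.reindex_bij_witness[of _ "\<lambda>(p,a,b). (p,b,a)" "\<lambda>(p,a,b). (p,b,a)"]) (auto simp: J_def)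
  have "2 * (\<Sum>(p,a,b)\<in>J. Exq (Y est p a b)) = (\<Sum>(p,a,b)\<in>J. Exq (Y est p a b)) + (\<Sum>(p,a,b)\<in>J. Exq (Y est p b a))"
    using sw by simp
  also have "\<dots> = (\<Sum>(p,a,b)\<in>J. Exq (Y est p a b) + Exq (Y est p b a))"
    by (simp add: sum.distrib[symmetric] case_prod_beta)
  also have "\<dots> = (\<Sum>(p,a,b)\<in>J. 2 * Exq (indicator {\<omega>. Gd p a b \<omega>}))"
    by (rule sum.cong) (auto simp: J_def EY_pair)
  also have "\<dots> = 2 * (\<Sum>(p,a,b)\<in>J. Exq (indicator {\<omega>. Gd p a b \<omega>}))"
    by (simp add: sum_distrib_left case_prod_beta)
  finally show ?thesis by simp
qed

end


context S begin

lemma Good_disj: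
  assumes p: "p \<in> Par" and p': "p' \<in> Par" and G: "Good p a b f \<sigma>" and G': "Good p' a' b' f \<sigma>"
    and ne: "(p, a, b) \<noteq> (p', a', b')"
  shows "{a, b} \<inter> {a', b'} = {}"
proof -
  note pf = Par_facts[OF p] and pf' = Par_facts[OF p']
  note gf = Good_facts[OF p G] and gf' = Good_facts[OF p' G']
  have inj: "inj_on \<sigma> V" by (rule gf(9))
  have Ga: "\<sigma> (p@[0]) = a" "b < n" "b \<notin> \<sigma> ` V" "f {\<sigma> p, b}"
     "\<And>x. x < n \<Longrightarrow> x \<notin> \<sigma> ` V \<Longrightarrow> x \<noteq> b \<Longrightarrow> \<not> f {\<sigma> p, x}"
     "\<And>y. y \<in> \<sigma> ` V \<Longrightarrow> y \<noteq> \<sigma> p \<Longrightarrow> y \<noteq> a \<Longrightarrow> \<not> f {a, y} \<and> \<not> f {b, y}"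
    using G unfolding Good_def by auto
  have Gb: "\<sigma> (p'@[0]) = a'" "b' < n" "b' \<notin> \<sigma> ` V" "f {\<sigma> p', b'}"
     "\<And>x. x < n \<Longrightarrow> x \<notin> \<sigma> ` V \<Longrightarrow> x \<noteq> b' \<Longrightarrow> \<not> f {\<sigma> p', x}"
     "\<And>y. y \<in> \<sigma> ` V \<Longrightarrow> y \<noteq> \<sigma> p' \<Longrightarrow> y \<noteq> a' \<Longrightarrow> \<not> f {a', y} \<and> \<not> f {b', y}"
    using G' unfolding Good_def by auto
  show ?thesis
  proof (cases "p = p'")
    case True
    then have "a = a'" using Ga(1) Gb(1) by simp
    with ne True have "b \<noteq> b'" by simp
    then have "\<not> f {\<sigma> p, b'}" using Ga(5)[of b'] Gb(2,3) by simp
    then show ?thesis using Gb(4) True by simp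
  next
    case False
    have aa: "a \<noteq> a'"
    proof
      assume "a = a'"
      then have "\<sigma> (p@[0]) = \<sigma> (p'@[0])" using Ga(1) Gb(1) by simp
      then have "p@[0] = p'@[0]" using inj pf(2) pf'(2) by (auto dest: inj_onD)
      then show False using False by simp
    qed
    have ab: "a \<noteq> b'" "b \<noteq> a'" using gf(6) gf'(6) Ga(3) Gb(3) by auto
    have bb: "b \<noteq> b'"
    proof
      assume bb: "b = b'"
      have u'K: "\<sigma> p' \<in> \<sigma> ` V" using pf' by simp
      have "\<sigma> p' \<noteq> \<sigma> p" using False inj pf(1) pf'(1) by (auto dest: inj_onD)
      moreover have "\<sigma> p' \<noteq> a"
      proof
        assume "\<sigma> p' = a"
        then have "\<sigma> p' = \<sigma> (p@[0])" using Ga(1) by simp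
        then have "p' = p@[0]" using inj pf(2) pf'(1) by (auto dest: inj_onD)
        then show False using pf(4) p' h1 unfolding Par_def by auto
      qed
      ultimately have "\<not> f {b, \<sigma> p'}" using Ga(6)[OF u'K] by simp
      then show False using Gb(4) bb by (simp add: insert_commute)
    qed
    show ?thesis using aa ab bb by auto
  qed
qed

lemma pointwise:
  assumes est: "estimator n (dary_size D h) est" and W: "\<omega> \<in> Ws"
  shows "(\<Sum>(p,a,b)\<in>J. Y est p a b \<omega>) \<le> real (card (Dl est \<omega>))"
proof -
  define Jg where "Jg = {j \<in> J. case j of (p,a,b) \<Rightarrow> Gd p a b \<omega>}"
  define P where "P = (\<lambda>j::nat list \<times> nat \<times> nat. case j of (p,a,b) \<Rightarrow> {a,b} \<inter> Dl est \<omega>)"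
  have fD: "finite (Dl est \<omega>)"
  proof -
    have "est (Gr \<omega>) \<subseteq> {..<n}" using est unfolding estimator_def by auto
    then have "finite (est (Gr \<omega>))" by (rule finite_subset) simp
    then show ?thesis unfolding Dl_def using finite_dary_vertices by auto
  qed
  have fJg: "finite Jg" unfolding Jg_def using finite_J by simp
  have "(\<Sum>(p,a,b)\<in>J. Y est p a b \<omega>) = (\<Sum>j\<in>Jg. real (card (P j)))"
  proof -
    have "(\<Sum>(p,a,b)\<in>J. Y est p a b \<omega>) = (\<Sum>j\<in>Jg. (case j of (p,a,b) \<Rightarrow> Y est p a b \<omega>))"
      unfolding Jg_def by (rule sum.mono_neutral_right) (auto simp: finite_J Y_def split: if_splits)
    also have "\<dots> = (\<Sum>j\<in>Jg. real (card (P j)))"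
    proof (rule sum.cong[OF refl])
      fix j assume "j \<in> Jg"
      then obtain p a b where j: "j = (p,a,b)" "p \<in> Par" "Gd p a b \<omega>" unfolding Jg_def J_def by auto
      then have "a \<noteq> b" using Good_facts(1)[OF j(2)] unfolding Gd_def by blast
      then show "(case j of (p,a,b) \<Rightarrow> Y est p a b \<omega>) = real (card (P j))"
        using j unfolding Y_def P_def by (auto simp: indicator_def card_insert_if)
    qed
    finally show ?thesis .
  qed
  also have "\<dots> = real (card (\<Union>j\<in>Jg. P j))"
  proof -
    have "card (\<Union>j\<in>Jg. P j) = (\<Sum>j\<in>Jg. card (P j))"
    proof (rule card_UN_disjoint[OF fJg])
      show "\<forall>j\<in>Jg. finite (P j)" unfolding P_def by auto
      show "\<forall>i\<in>Jg. \<forall>j\<in>Jg. i \<noteq> j \<longrightarrow> P i \<inter> P j = {}"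
      proof (intro ballI impI)
        fix i j assume i: "i \<in> Jg" and j: "j \<in> Jg" and ij: "i \<noteq> j"
        obtain p a b where i': "i = (p,a,b)" "p \<in> Par" "Gd p a b \<omega>" using i unfolding Jg_def J_def by auto
        obtain p' a' b' where j': "j = (p',a',b')" "p' \<in> Par" "Gd p' a' b' \<omega>" using j unfolding Jg_def J_def by auto
        have "{a, b} \<inter> {a', b'} = {}"
          using Good_disj[OF i'(2) j'(2)] i'(3) j'(3) ij i'(1) j'(1) unfolding Gd_def by blast
        then show "P i \<inter> P j = {}" unfolding P_def i'(1) j'(1) by auto
      qed
    qed
    then show ?thesis by simp
  qed
  also have "\<dots> \<le> real (card (Dl est \<omega>))"
    using fD by (auto intro!: card_mono simp: P_def)
  finally show ?thesis .
qed

lemma sum_pmf_Ws: "(\<Sum>\<omega>\<in>Ws. pmf Om \<omega>) = 1"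
  using prob_sum[of UNIV] by simp

lemma card_Dl:
  assumes est: "estimator n (dary_size D h) est" and W: "\<omega> \<in> Ws"
  shows "real (card (Dl est \<omega>)) = 2 * real (dary_size D h) - 2 * real (card (est (Gr \<omega>) \<inter> snd \<omega> ` V))"
proof -
  define K where "K = snd \<omega> ` V"
  define X where "X = est (Gr \<omega>)"
  have "snd \<omega> \<in> Inj" using W unfolding Ws_def by auto
  then have "inj_on (snd \<omega>) V" unfolding Inj_def by auto
  then have cK: "card K = dary_size D h" unfolding K_def
    using card_image card_dary_vertices'[OF D2] by metis
  have cX: "card X = dary_size D h" "finite X" using est unfolding estimator_def X_def
    by (auto intro: finite_subset[of _ "{..<n}"])
  have fK: "finite K" unfolding K_def using finite_dary_vertices by simp
  have "card (Dl est \<omega>) = card (K - X) + card (X - K)"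
    unfolding Dl_def K_def[symmetric] X_def[symmetric]
    by (rule card_Un_disjoint) (use fK cX in auto)
  moreover have "card (K - X) = card K - card (X \<inter> K)"
    using fK by (metis card_Diff_subset_Int Int_commute finite_Int)
  moreover have "card (X - K) = card X - card (X \<inter> K)"
    using cX by (metis card_Diff_subset_Int finite_Int)
  moreover have "card (X \<inter> K) \<le> card K" using fK by (simp add: card_mono)
  ultimately show ?thesis using cK cX unfolding K_def X_def by (simp add: of_nat_diff)
qed

lemma overlap_bound:
  assumes est: "estimator n (dary_size D h) est"
  shows "overlap D lam h n est \<le> real (dary_size D h) - (\<Sum>(p,a,b)\<in>J. Exq (indicator {\<omega>. Gd p a b \<omega>})) / 2"
proof -
  define ov where "ov = overlap D lam h n est"
  have ov: "ov = Exq (\<lambda>\<omega>. real (card (est (Gr \<omega>) \<inter> snd \<omega> ` V)))"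
    unfolding ov_def Exq_def by (rule overlap_eq[OF est])
  have "(\<Sum>(p,a,b)\<in>J. Exq (indicator {\<omega>. Gd p a b \<omega>})) = (\<Sum>(p,a,b)\<in>J. Exq (Y est p a b))"
    by (rule sumJ_Y[symmetric])
  also have "\<dots> = Exq (\<lambda>\<omega>. \<Sum>(p,a,b)\<in>J. Y est p a b \<omega>)"
    unfolding Exq_def by (simp add: sum_distrib_left case_prod_beta sum.swap[of _ J])
  also have "\<dots> \<le> Exq (\<lambda>\<omega>. real (card (Dl est \<omega>)))"
    unfolding Exq_def by (rule sum_mono) (use pointwise[OF est] in \<open>auto intro: mult_left_mono\<close>)
  also have "\<dots> = Exq (\<lambda>\<omega>. 2 * real (dary_size D h) - 2 * real (card (est (Gr \<omega>) \<inter> snd \<omega> ` V)))"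
    unfolding Exq_def by (rule sum.cong) (auto simp: card_Dl[OF est])
  also have "\<dots> = (\<Sum>\<omega>\<in>Ws. (2 * real (dary_size D h)) * pmf Om \<omega> - 2 * (pmf Om \<omega> * real (card (est (Gr \<omega>) \<inter> snd \<omega> ` V))))"
    unfolding Exq_def by (rule sum.cong) (auto simp: algebra_simps)
  also have "\<dots> = (2 * real (dary_size D h)) * (\<Sum>\<omega>\<in>Ws. pmf Om \<omega>) - 2 * ov"
    unfolding ov Exq_def by (simp only: sum_subtractf sum_distrib_left)
  also have "\<dots> = 2 * real (dary_size D h) - 2 * ov" by (simp add: sum_pmf_Ws)
  finally show ?thesis unfolding ov_def by simp
qed

end


context S begin

lemma single_bound:
  assumes p: "p \<in> Par" and s: "\<sigma> \<in> Inj" and b: "b < n" "b \<notin> \<sigma> ` V"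
  shows "measure_pmf.prob Fp {f. Good p (\<sigma> (p@[0])) b f \<sigma>} \<ge> q * (1 - q) ^ (3 * n + 1)"
proof -
  note pf = Par_facts[OF p]
  define u where "u = \<sigma> p"
  define a where "a = \<sigma> (p@[0])"
  define K where "K = \<sigma> ` V"
  have inj: "inj_on \<sigma> V" and sig: "\<sigma> \<in> V \<rightarrow>\<^sub>E {..<n}" using s unfolding Inj_def by auto
  have Kn': "K \<subseteq> {..<n}" using sig unfolding K_def by auto
  have uK: "u \<in> K" and aK: "a \<in> K" using pf unfolding u_def a_def K_def by auto
  have ua: "u \<noteq> a" unfolding u_def a_def using pf inj by (auto dest: inj_onD)
  have bK: "b \<notin> K" using b unfolding K_def by simp
  have cardK: "card K = dary_size D h" unfolding K_def using card_image[OF inj] card_dary_vertices'[OF D2] by simp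
  define e0 where "e0 = {u, b}"
  define B where "B = insert {u, a} ((\<lambda>x. {u, x}) ` ({..<n} - K - {b}) \<union> (\<lambda>y. {a, y}) ` (K - {u, a}) \<union> (\<lambda>y. {b, y}) ` (K - {u, a}))"
  have BA: "\<forall>e\<in>B. e \<in> A \<and> e \<noteq> e0"
    unfolding B_def e0_def using Kn' uK aK bK ua b(1)
    by (auto simp: all_edges_def doubleton_eq_iff)
  have e0A: "e0 \<in> A" unfolding e0_def all_edges_def using uK bK Kn' b(1) by auto
  define Bs where "Bs = (\<lambda>e. if e = e0 then {True} else if e \<in> B then {False} else UNIV)"
  have sub: "Pi A Bs \<subseteq> {f. Good p a b f \<sigma>}"
  proof
    fix f assume f: "f \<in> Pi A Bs"
    have "f e0 \<in> Bs e0" using f e0A by (rule Pi_mem)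
    then have f0: "f e0" unfolding Bs_def by simp
    have fB: "\<not> f e" if e: "e \<in> B" for e
    proof -
      have "f e \<in> Bs e" using f BA e by (auto intro: Pi_mem)
      then show ?thesis unfolding Bs_def using BA e by auto
    qed
    show "f \<in> {f. Good p a b f \<sigma>}"
      unfolding Good_def mem_Collect_eq
      using s b f0 fB unfolding a_def[symmetric] u_def[symmetric] K_def[symmetric] e0_def B_def
      by auto
  qed
  have q01: "0 \<le> q" "q \<le> 1" using q0 q1 by auto
  have pr: "measure_pmf.prob (bernoulli_pmf q) (Bs e) = (if e = e0 then q else if e \<in> B then 1 - q else 1)" for e
    using q01 unfolding Bs_def by (auto simp: measure_pmf_single)
  have cB: "card B \<le> 3 * n + 1"
  proof -
    have "card B \<le> Suc (card ((\<lambda>x. {u, x}) ` ({..<n} - K - {b}) \<union> (\<lambda>y. {a, y}) ` (K - {u, a}) \<union> (\<lambda>y. {b, y}) ` (K - {u, a})))"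
      unfolding B_def by (rule card_insert_le_m1) auto
    also have "card ((\<lambda>x. {u, x}) ` ({..<n} - K - {b}) \<union> (\<lambda>y. {a, y}) ` (K - {u, a}) \<union> (\<lambda>y. {b, y}) ` (K - {u, a}))
       \<le> card ((\<lambda>x. {u, x}) ` ({..<n} - K - {b})) + card ((\<lambda>y. {a, y}) ` (K - {u, a})) + card ((\<lambda>y. {b, y}) ` (K - {u, a}))"
      by (meson card_Un_le add_le_mono order_trans le_refl)
    also have "\<dots> \<le> card ({..<n} - K - {b}) + card (K - {u, a}) + card (K - {u, a})"
      by (intro add_mono card_image_le) (use Kn' in \<open>auto intro: finite_subset\<close>)
    also have "\<dots> \<le> n + card K + card K"
    proof -
      have c1: "card ({..<n} - K - {b}) \<le> n" using card_mono[of "{..<n}" "{..<n} - K - {b}"] by auto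
      have fK: "finite K" using Kn' by (auto intro: finite_subset)
      have c2: "card (K - {u, a}) \<le> card K" using fK card_mono by (metis Diff_subset)
      show ?thesis using c1 c2 by linarith
    qed
    also have "\<dots> \<le> 3 * n" using cardK Kn by simp
    finally show ?thesis by simp
  qed
  have "measure_pmf.prob Fp (Pi A Bs) = (\<Prod>e\<in>A. measure_pmf.prob (bernoulli_pmf q) (Bs e))"
    unfolding Fp_def by (rule measure_Pi_pmf_Pi[OF finite_A])
  also have "\<dots> = q * (\<Prod>e\<in>A - {e0}. (if e \<in> B then 1 - q else 1))"
    unfolding pr using finite_A e0A by (simp add: prod.remove)
  also have "(\<Prod>e\<in>A - {e0}. (if e \<in> B then 1 - q else 1)) = (1 - q) ^ card ((A - {e0}) \<inter> B)"
    using finite_A by (simp add: prod.inter_restrict[symmetric])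
  also have "(1 - q) ^ card ((A - {e0}) \<inter> B) \<ge> (1 - q) ^ (3 * n + 1)"
  proof (rule power_decreasing)
    have "finite B" using BA finite_A by (metis finite_subset subsetI)
    then have "card ((A - {e0}) \<inter> B) \<le> card B" by (simp add: card_mono)
    then show "card ((A - {e0}) \<inter> B) \<le> 3 * n + 1" using cB by simp
  qed (use q01 in auto)
  then have "q * (1 - q) ^ card ((A - {e0}) \<inter> B) \<ge> q * (1 - q) ^ (3 * n + 1)"
    using q01(1) by (rule mult_left_mono)
  finally have "measure_pmf.prob Fp (Pi A Bs) \<ge> q * (1 - q) ^ (3 * n + 1)" .
  moreover have "measure_pmf.prob Fp (Pi A Bs) \<le> measure_pmf.prob Fp {f. Good p a b f \<sigma>}"
    using sub by (rule measure_pmf.finite_measure_mono) simp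
  ultimately show ?thesis unfolding a_def by simp
qed

end


context S begin

definition "PD = PiE_dflt A False (\<lambda>_. UNIV :: bool set)"

lemma finite_PD: "finite PD" unfolding PD_def using finite_A by (auto intro!: finite_PiE_dflt)

lemma set_Fp: "set_pmf Fp \<subseteq> PD"
  unfolding Fp_def PD_def using finite_A by (auto simp: set_Pi_pmf PiE_dflt_def)

lemma prob_Fp: "measure_pmf.prob Fp X = (\<Sum>f\<in>PD. pmf Fp f * indicator X f)"
proof -
  have "measure_pmf.prob Fp X = measure_pmf.expectation Fp (indicator X)" by simp
  also have "\<dots> = (\<Sum>a\<in>PD. indicator X a * pmf Fp a)"
    by (rule integral_measure_pmf_real) (use finite_PD set_Fp in auto)
  finally show ?thesis by (simp add: mult.commute)
qed

lemma Exq_Gd: "Exq (indicator {\<omega>. Gd p a b \<omega>}) = (\<Sum>\<sigma>\<in>Inj. measure_pmf.prob Fp {f. Good p a b f \<sigma>} / real (card Inj))"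
proof -
  have "Exq (indicator {\<omega>. Gd p a b \<omega>}) = (\<Sum>f\<in>PD. \<Sum>\<sigma>\<in>Inj. pmf Om (f, \<sigma>) * indicator {\<omega>. Gd p a b \<omega>} (f, \<sigma>))"
    unfolding Exq_def Ws_def PD_def[symmetric] by (simp add: sum.cartesian_product)
  also have "\<dots> = (\<Sum>\<sigma>\<in>Inj. \<Sum>f\<in>PD. (pmf Fp f * indicator {f. Good p a b f \<sigma>} f) / real (card Inj))"
    by (subst sum.swap) (auto intro!: sum.cong simp: pmf_Om Gd_def indicator_def)
  also have "\<dots> = (\<Sum>\<sigma>\<in>Inj. measure_pmf.prob Fp {f. Good p a b f \<sigma>} / real (card Inj))"
    by (simp add: prob_Fp sum_divide_distrib)
  finally show ?thesis .
qed

lemma per_sigma: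
  assumes p: "p \<in> Par" and s: "\<sigma> \<in> Inj"
  shows "(\<Sum>a<n. \<Sum>b<n. measure_pmf.prob Fp {f. Good p a b f \<sigma>}) \<ge> real (n - dary_size D h) * (q * (1 - q) ^ (3 * n + 1))"
proof -
  note pf = Par_facts[OF p]
  define a0 where "a0 = \<sigma> (p@[0])"
  define S0 where "S0 = {..<n} - \<sigma> ` V"
  have inj: "inj_on \<sigma> V" and sig: "\<sigma> \<in> V \<rightarrow>\<^sub>E {..<n}" using s unfolding Inj_def by auto
  have a0n: "a0 < n" using sig pf unfolding a0_def by auto
  have cS: "card S0 = n - dary_size D h"
  proof -
    have "\<sigma> ` V \<subseteq> {..<n}" using sig by auto
    then have "card S0 = n - card (\<sigma> ` V)" unfolding S0_def by (simp add: card_Diff_subset finite_subset)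
    then show ?thesis using card_image[OF inj] card_dary_vertices'[OF D2] by simp
  qed
  have "real (n - dary_size D h) * (q * (1 - q) ^ (3 * n + 1)) = (\<Sum>b\<in>S0. q * (1 - q) ^ (3 * n + 1))"
    using cS by simp
  also have "\<dots> \<le> (\<Sum>b\<in>S0. measure_pmf.prob Fp {f. Good p a0 b f \<sigma>})"
    by (rule sum_mono) (use single_bound[OF p s] in \<open>auto simp: S0_def a0_def\<close>)
  also have "\<dots> \<le> (\<Sum>b<n. measure_pmf.prob Fp {f. Good p a0 b f \<sigma>})"
    by (rule sum_mono2) (auto simp: S0_def)
  also have "\<dots> \<le> (\<Sum>a<n. \<Sum>b<n. measure_pmf.prob Fp {f. Good p a b f \<sigma>})"
    using a0n by (intro member_le_sum) (auto intro: sum_nonneg)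
  finally show ?thesis .
qed

lemma sumJ_lower:
  "(\<Sum>(p,a,b)\<in>J. Exq (indicator {\<omega>. Gd p a b \<omega>})) \<ge> real (card Par) * (real (n - dary_size D h) * (q * (1 - q) ^ (3 * n + 1)))"
proof -
  define L where "L = real (n - dary_size D h) * (q * (1 - q) ^ (3 * n + 1))"
  have "(\<Sum>(p,a,b)\<in>J. Exq (indicator {\<omega>. Gd p a b \<omega>})) = (\<Sum>p\<in>Par. \<Sum>a<n. \<Sum>b<n. Exq (indicator {\<omega>. Gd p a b \<omega>}))"
    unfolding J_def by (simp add: sum.cartesian_product)
  also have "\<dots> = (\<Sum>p\<in>Par. \<Sum>\<sigma>\<in>Inj. (\<Sum>a<n. \<Sum>b<n. measure_pmf.prob Fp {f. Good p a b f \<sigma>}) / real (card Inj))"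
    unfolding Exq_Gd by (simp add: sum_divide_distrib[symmetric] sum.swap[of _ Inj])
  also have "\<dots> \<ge> (\<Sum>p\<in>Par. \<Sum>\<sigma>\<in>Inj. L / real (card Inj))"
    apply (intro sum_mono divide_right_mono)
    subgoal for p \<sigma> unfolding L_def by (rule per_sigma)
    subgoal by simp
    done
  also have "(\<Sum>p\<in>Par. \<Sum>\<sigma>\<in>Inj. L / real (card Inj)) = real (card Par) * L"
    using finite_Inj Inj_ne by simp
  finally show ?thesis unfolding L_def .
qed

end


context S begin

lemma final_loc:
  assumes est: "estimator n (dary_size D h) est"
  shows "overlap D lam h n est \<le> real (dary_size D h) * (1 - real (n - dary_size D h) * (q * (1 - q) ^ (3 * n + 1)) / (4 * real D))"
proof -
  define K where "K = real (dary_size D h)"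
  define M where "M = real (n - dary_size D h) * (q * (1 - q) ^ (3 * n + 1))"
  have M0: "M \<ge> 0" unfolding M_def by (intro mult_nonneg_nonneg zero_le_power) (use q0 q1 in auto)
  have KD: "K \<le> 2 * real D * real (card Par)"
  proof -
    have "dary_size D h \<le> 2 * D ^ h" using dary_size_eq[OF D2] geom_le[OF D2] by simp
    also have "D ^ h = D * D ^ (h - 1)" using h1 by (metis Suc_diff_1 less_le_trans zero_less_one power_Suc)
    finally have "dary_size D h \<le> 2 * D * card Par" using card_Par by (simp add: mult.assoc)
    then show ?thesis unfolding K_def by (metis of_nat_le_iff of_nat_mult of_nat_numeral)
  qed
  have "overlap D lam h n est \<le> K - (real (card Par) * M) / 2"
  proof -
    obtain Sx where S1: "overlap D lam h n est \<le> K - Sx / 2" and S2: "real (card Par) * M \<le> Sx"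
      using overlap_bound[OF est] sumJ_lower unfolding K_def M_def by blast
    obtain Yx where "Yx = real (card Par) * M" by blast
    then show ?thesis using S1 S2 by linarith
  qed
  also have "\<dots> \<le> K - K * M / (4 * real D)"
  proof -
    have "K * M / (4 * real D) \<le> (2 * real D * real (card Par)) * M / (4 * real D)"
      using KD M0 D2 by (intro divide_right_mono mult_right_mono) auto
    also have "\<dots> = real (card Par) * M / 2" using D2 by (simp add: field_simps)
    finally show ?thesis by simp
  qed
  also have "\<dots> = K * (1 - M / (4 * real D))" by (simp add: algebra_simps)
  finally show ?thesis unfolding K_def M_def .
qed

end

lemma exp_limit_ev:
  fixes lam :: real
  shows "\<forall>\<^sub>F n in sequentially. (1 - lam / real n) ^ (3 * n + 1) \<ge> exp (-3 * lam) / 2"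
proof -
  have l1: "(\<lambda>n. (1 + (-lam) / real n) ^ n) \<longlonglongrightarrow> exp (-lam)" by (rule tendsto_exp_limit_sequentially)
  have l2: "(\<lambda>n. 1 - lam / real n) \<longlonglongrightarrow> 1 - 0"
    by (intro tendsto_diff tendsto_const lim_const_over_n)
  have "(\<lambda>n. ((1 + (-lam) / real n) ^ n) ^ 3 * (1 - lam / real n)) \<longlonglongrightarrow> exp (-lam) ^ 3 * (1 - 0)"
    by (intro tendsto_intros l1 l2)
  moreover have "exp (-lam) ^ 3 * (1 - 0) = exp (-3 * lam)"
    by (simp add: exp_of_nat_mult[symmetric])
  moreover have "\<And>n. ((1 + (-lam) / real n) ^ n) ^ 3 * (1 - lam / real n) = (1 - lam / real n) ^ (3 * n + 1)"
  proof -
    fix n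
    have pw: "\<And>x::real. x ^ (3 * n + 1) = (x ^ n) ^ 3 * x"
      by (simp add: power_add power_mult[symmetric] mult.commute)
    have "1 + (-lam) / real n = 1 - lam / real n" by simp
    then show "((1 + (-lam) / real n) ^ n) ^ 3 * (1 - lam / real n) = (1 - lam / real n) ^ (3 * n + 1)"
      by (simp only: pw)
  qed
  ultimately have L: "(\<lambda>n. (1 - lam / real n) ^ (3 * n + 1)) \<longlonglongrightarrow> exp (-3 * lam)" by (simp only:)
  have "exp (-3 * lam) / 2 < exp (-3 * lam)" by simp
  from order_tendstoD(1)[OF L this] show ?thesis by (auto elim: eventually_mono)
qed



lemma hbar_pos: assumes "hbar D lam n \<le> enat m" shows "m \<ge> 1"
proof (cases "\<exists>h>0. p_gw D lam h < 1 / real n")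
  case True
  then have "(LEAST h. h > 0 \<and> p_gw D lam h < 1 / real n) > 0"
    by (metis (mono_tags, lifting) LeastI_ex)
  moreover have "(LEAST h. h > 0 \<and> p_gw D lam h < 1 / real n) \<le> m"
    using assms True unfolding hbar_def by simp
  ultimately show ?thesis by simp
next
  case False
  then have "hbar D lam n = \<infinity>" unfolding hbar_def by (rule if_not_P)
  with assms show ?thesis by simp
qed

theorem theorem11:
  fixes D :: nat and lam :: real and h :: "nat \<Rightarrow> nat"
  assumes "D \<ge> 2" and "lam > 0"
    and "\<forall>\<^sub>F n in sequentially. hbar D lam n \<le> enat (h n)"
    and "(\<lambda>n. real (dary_size D (h n))) \<in> o(\<lambda>n. real n)"
  shows "\<exists>\<delta>>0. \<forall>\<^sub>F n in sequentially. \<forall>est. estimator n (dary_size D (h n)) est \<longrightarrow>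
           overlap D lam (h n) n est \<le> (1 - \<delta>) * real (dary_size D (h n))"
proof -
  define \<delta> where "\<delta> = lam * exp (-3 * lam) / (16 * real D)"
  have D0: "real D > 0" using assms(1) by simp
  have d0: "\<delta> > 0" unfolding \<delta>_def using assms(2) D0 by simp
  have E1: "\<forall>\<^sub>F n in sequentially. h n \<ge> 1" by (rule eventually_mono[OF assms(3) hbar_pos])
  have E2: "\<forall>\<^sub>F n in sequentially. real n \<ge> lam \<and> n > 0"
  proof (rule eventually_mono[OF eventually_ge_at_top[of "nat \<lceil>lam\<rceil> + 1"]])
    fix n :: nat assume n: "nat \<lceil>lam\<rceil> + 1 \<le> n"
    have l1: "lam \<le> real (nat \<lceil>lam\<rceil>)" by (rule real_nat_ceiling_ge)
    have "nat \<lceil>lam\<rceil> \<le> n" using n by linarith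
    then have l2: "real (nat \<lceil>lam\<rceil>) \<le> real n" by (rule of_nat_mono)
    show "real n \<ge> lam \<and> n > 0" using l1 l2 n by auto
  qed
  have E3: "\<forall>\<^sub>F n in sequentially. real (dary_size D (h n)) \<le> 1/2 * real n"
    using landau_o.smallD[OF assms(4), of "1/2"] by simp
  have E4: "\<forall>\<^sub>F n in sequentially. (1 - lam / real n) ^ (3 * n + 1) \<ge> exp (-3 * lam) / 2"
    by (rule exp_limit_ev)
  have "\<forall>\<^sub>F n in sequentially. \<forall>est. estimator n (dary_size D (h n)) est \<longrightarrow>
           overlap D lam (h n) n est \<le> (1 - \<delta>) * real (dary_size D (h n))"
    using E1 E2 E3 E4
  proof eventually_elim
    case (elim n)
    define K where "K = dary_size D (h n)"
    define q where "q = lam / real n"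
    have Kn: "K \<le> n" using elim(3) unfolding K_def by linarith
    have q01: "0 \<le> q" "q \<le> 1" using elim(2) assms(2) unfolding q_def by (auto simp: divide_le_eq)
    interpret S D "h n" n lam
      by unfold_locales (use assms(1) elim(1) q01 Kn in \<open>auto simp: q_def K_def\<close>)
    show ?case
    proof (intro allI impI)
      fix est assume est: "estimator n (dary_size D (h n)) est"
      define X where "X = real (n - K) * (q * (1 - q) ^ (3 * n + 1)) / (4 * real D)"
      have ov: "overlap D lam (h n) n est \<le> real K * (1 - X)"
        using final_loc[OF est] unfolding X_def K_def q_def .
      have nK: "real (n - K) \<ge> real n / 2" using Kn elim(3) unfolding K_def by (simp add: of_nat_diff)
      have "real (n - K) * q \<ge> (real n / 2) * q" using nK q01(1) by (rule mult_right_mono)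
      also have "(real n / 2) * q = lam / 2" using elim(2) unfolding q_def by simp
      finally have a: "real (n - K) * q \<ge> lam / 2" .
      have b: "(1 - q) ^ (3 * n + 1) \<ge> exp (-3 * lam) / 2" using elim(4) unfolding q_def .
      have "(lam / 2) * (exp (-3 * lam) / 2) \<le> (real (n - K) * q) * (1 - q) ^ (3 * n + 1)"
      proof -
        have c: "0 \<le> real (n - K) * q" using q01 by simp
        have e: "0 \<le> exp (-3 * lam) / 2" by simp
        show ?thesis by (rule mult_mono[OF a b c e])
      qed
      then have "\<delta> \<le> X" unfolding X_def \<delta>_def using D0
        by (simp add: divide_right_mono field_simps)
      then have "real K * (1 - X) \<le> real K * (1 - \<delta>)" by (simp add: mult_left_mono)
      with ov show "overlap D lam (h n) n est \<le> (1 - \<delta>) * real (dary_size D (h n))"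
        unfolding K_def by (simp add: mult.commute)
    qed
  qed
  then show ?thesis using d0 by blast
qed


end
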